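(* Let $n,k,r,\ell$ be positive integers. Then \[S_{\geq \ell}(n,k,r)=(k+r-1)S_{\geq \ell}(n-1,k,r)+\binom{n-1}{\ell-1}\Big((k-1)S_{\geq \ell}(n-\ell,k-1,r)+S_{\geq \ell}(n-\ell,k,r-1)\Big),\] where terms with $n-\ell<0$ (for which $\binom{n-1}{\ell-1}=0$) are $0$ and the term $(k-1)S_{\geq \ell}(n-\ell,k-1,r)$ is $0$ when $k=1$.
   Context: For integers $N\ge 0$, $k\ge1$, $r\ge 0$, $\ell\ge1$, $S_{\geq \ell}(N,k,r)$ is the number of ways to partition $[N]=\{1,\dots,N\}$ into $r+k-1$ non-empty blocks, each of size at least $\ell$, where $r$ of the blocks receive the label $1$ (blocks with label $1$ are indistinguishable among themselves) and the remaining $k-1$ blocks receive the distinct labels $2,3,\dots,k$. *)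

theory Defs
  imports "HOL-Library.Disjoint_Sets" "HOL-Library.FuncSet"
begin

text \<open>S_{>= l}(N,k,r): pairs (P, L) where P is a set partition of {1..N} into
  non-empty blocks each of size at least l, and L labels the blocks with labels
  in {1..k} so that each label j in {2..k} is used by exactly one block and label 1
  is used by exactly r blocks (blocks with label 1 are thus unordered).
  Hence P has r+k-1 blocks.\<close>

definition S_ge :: "nat \<Rightarrow> nat \<Rightarrow> nat \<Rightarrow> nat \<Rightarrow> nat" where
  "S_ge l N k r = card {(P, L). partition_on {1..N} P
       \<and> (\<forall>B\<in>P. l \<le> card B)
       \<and> L \<in> P \<rightarrow>\<^sub>E {1..k}
       \<and> (\<forall>j\<in>{2..k}. card {B\<in>P. L B = j} = 1)
       \<and> card {B\<in>P. L B = 1} = r}"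

end

theory Submission
  imports Defs
begin


definition X :: "nat \<Rightarrow> nat set \<Rightarrow> nat \<Rightarrow> nat set \<Rightarrow> nat \<Rightarrow> (nat set set \<times> (nat set \<Rightarrow> nat)) set" where
"X l A e D r = {(P, L). partition_on A P \<and> (\<forall>B\<in>P. l \<le> card B) \<and> L \<in> P \<rightarrow>\<^sub>E insert e D
    \<and> (\<forall>j\<in>D. card {B\<in>P. L B = j} = 1) \<and> card {B\<in>P. L B = e} = r}"

lemma S_ge_X: "k \<ge> 1 \<Longrightarrow> S_ge l N k r = card (X l {1..N} 1 {2..k} r)"
proof -
  assume "k \<ge> 1"
  then have "{1..k} = insert 1 {2..k}" by auto
  then show ?thesis unfolding S_ge_def X_def by simp
qed

lemma X_finite: "finite A \<Longrightarrow> finite D \<Longrightarrow> finite (X l A e D r)"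
proof -
  assume f: "finite A" "finite D"
  have "X l A e D r \<subseteq> Sigma (Pow (Pow A)) (\<lambda>P. P \<rightarrow>\<^sub>E insert e D)"
    unfolding X_def partition_on_def by auto
  moreover have "finite (Sigma (Pow (Pow A)) (\<lambda>P. P \<rightarrow>\<^sub>E insert e D))"
    using f by (intro finite_SigmaI finite_PiE) (auto intro: finite_subset)
  ultimately show ?thesis by (rule finite_subset)
qed

lemma X_cardP:
  assumes "(P, L) \<in> X l A e D r" "finite A" "finite D" "e \<notin> D"
  shows "card P = card D + r"
proof -
  have pa: "partition_on A P" and L: "L \<in> P \<rightarrow>\<^sub>E insert e D"
    and c1: "\<forall>j\<in>D. card {B\<in>P. L B = j} = 1" and ce: "card {B\<in>P. L B = e} = r"
    using assms(1) unfolding X_def by auto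
  have fP: "finite P" using finite_elements[OF assms(2) pa] .
  have "P = (\<Union>x\<in>insert e D. {B\<in>P. L B = x})" using L by auto
  then have "card P = (\<Sum>x\<in>insert e D. card {B\<in>P. L B = x})"
  proof -
    have "card (\<Union>x\<in>insert e D. {B\<in>P. L B = x}) = (\<Sum>x\<in>insert e D. card {B\<in>P. L B = x})"
      by (rule card_UN_disjoint) (use fP assms(3) in auto)
    then show ?thesis using \<open>P = _\<close> by simp
  qed
  also have "\<dots> = r + (\<Sum>x\<in>D. card {B\<in>P. L B = x})"
    using assms(3,4) ce by simp
  also have "(\<Sum>x\<in>D. card {B\<in>P. L B = x}) = card D" using c1 by simp
  finally show ?thesis by simp
qed

lemma X_map_le:
  assumes fA': "finite A'" and fD': "finite D'" and h: "inj_on h A" "h ` A = A'"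
    and g: "inj_on g (insert e D)" "g e = e'" "g ` D = D'"
  shows "card (X l A e D r) \<le> card (X l A' e' D' r)"
proof -
  define \<Phi> where "\<Phi> = (\<lambda>(P::nat set set, L::nat set \<Rightarrow> nat).
     ((`) h ` P, \<lambda>B'\<in>(`) h ` P. g (L (A \<inter> h -` B'))))"
  have inv: "A \<inter> h -` (h ` B) = B" if "B \<subseteq> A" for B using h(1) that
    by (auto simp: inj_on_def)
  have geq: "g x = g y \<longleftrightarrow> x = y" if "x \<in> insert e D" "y \<in> insert e D" for x y
    using g(1) that by (auto simp: inj_on_def)
  have into: "\<Phi> s \<in> X l A' e' D' r" if s: "s \<in> X l A e D r" for s
  proof -
    obtain P L where sPL: "s = (P, L)" by (cases s)
    have pa: "partition_on A P" and cb: "\<forall>B\<in>P. l \<le> card B" and L: "L \<in> P \<rightarrow>\<^sub>E insert e D"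
      and c1: "\<forall>j\<in>D. card {B\<in>P. L B = j} = 1" and ce: "card {B\<in>P. L B = e} = r"
      using s sPL unfolding X_def by auto
    have PA: "\<And>B. B \<in> P \<Longrightarrow> B \<subseteq> A" using pa unfolding partition_on_def by auto
    have ne: "{} \<notin> P" using pa unfolding partition_on_def by auto
    have injP: "inj_on ((`) h) P" using inj_on_image_Pow[OF h(1)] PA
      by (meson PowI inj_on_subset subsetI)
    define L' where "L' = (\<lambda>B'\<in>(`) h ` P. g (L (A \<inter> h -` B')))"
    have L'B: "L' (h ` B) = g (L B)" if "B \<in> P" for B
      using that PA inv unfolding L'_def by auto
    have fib: "{B'\<in>(`) h ` P. L' B' = g j} = (`) h ` {B\<in>P. L B = j}" if "j \<in> insert e D" for j
    proof -
      have "\<And>B. B \<in> P \<Longrightarrow> (g (L B) = g j) = (L B = j)" using geq L that by auto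
      then show ?thesis using L'B by auto
    qed
    have cfib: "card {B'\<in>(`) h ` P. L' B' = g j} = card {B\<in>P. L B = j}" if "j \<in> insert e D" for j
      unfolding fib[OF that] by (rule card_image) (rule inj_on_subset[OF injP], auto)
    have "partition_on A' ((`) h ` P)"
    proof -
      have "partition_on (h ` A) ((`) h ` P - {{}})" by (rule partition_on_inj_image[OF pa h(1)])
      moreover have "(`) h ` P - {{}} = (`) h ` P" using ne by auto
      ultimately show ?thesis using h(2) by simp
    qed
    moreover have "\<forall>B\<in>(`) h ` P. l \<le> card B"
    proof
      fix B' assume "B' \<in> (`) h ` P"
      then obtain B where "B \<in> P" "B' = h ` B" by auto
      then show "l \<le> card B'" using cb card_image[OF inj_on_subset[OF h(1) PA]] by auto
    qed
    moreover have "L' \<in> (`) h ` P \<rightarrow>\<^sub>E insert e' D'"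
    proof -
      have "\<And>B. B \<in> P \<Longrightarrow> g (L B) \<in> insert e' D'" using L g(2,3) by auto
      then have "\<And>B'. B' \<in> (`) h ` P \<Longrightarrow> g (L (A \<inter> h -` B')) \<in> insert e' D'"
        using PA inv by (metis imageE)
      then show ?thesis unfolding L'_def by auto
    qed
    moreover have "\<forall>j\<in>D'. card {B\<in>(`) h ` P. L' B = j} = 1"
    proof
      fix j' assume "j' \<in> D'"
      then obtain j where "j \<in> D" "j' = g j" using g(3) by auto
      then show "card {B\<in>(`) h ` P. L' B = j'} = 1" using cfib[of j] c1 by auto
    qed
    moreover have "card {B\<in>(`) h ` P. L' B = e'} = r" using cfib[of e] ce g(2) by auto
    moreover have "\<Phi> s = ((`) h ` P, L')" by (simp add: sPL \<Phi>_def L'_def)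
    ultimately show ?thesis unfolding X_def by simp
  qed
  have inj: "inj_on \<Phi> (X l A e D r)"
  proof (rule inj_onI)
    fix s t assume s: "s \<in> X l A e D r" and t: "t \<in> X l A e D r" and st: "\<Phi> s = \<Phi> t"
    obtain P L where sPL: "s = (P, L)" by (cases s)
    obtain Q M where tQM: "t = (Q, M)" by (cases t)
    have PA: "P \<subseteq> Pow A" and QA: "Q \<subseteq> Pow A" using s t sPL tQM unfolding X_def partition_on_def by auto
    have L: "L \<in> P \<rightarrow>\<^sub>E insert e D" and M: "M \<in> Q \<rightarrow>\<^sub>E insert e D" using s t sPL tQM unfolding X_def by auto
    have e1: "(`) h ` P = (`) h ` Q" and
      e2: "(\<lambda>B'\<in>(`) h ` P. g (L (A \<inter> h -` B'))) = (\<lambda>B'\<in>(`) h ` Q. g (M (A \<inter> h -` B')))"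
      using st sPL tQM unfolding \<Phi>_def by auto
    have PQ: "P = Q" using e1 inj_on_image_eq_iff[OF inj_on_image_Pow[OF h(1)] PA QA] by simp
    have "L B = M B" if "B \<in> P" for B
    proof -
      have "g (L (A \<inter> h -` (h ` B))) = g (M (A \<inter> h -` (h ` B)))"
        using fun_cong[OF e2, of "h ` B"] that PQ by auto
      then have "g (L B) = g (M B)" using inv[of B] PA that by auto
      then show ?thesis using geq L M that PQ by auto
    qed
    then have "L = M" using PiE_ext[OF L] M PQ by auto
    then show "s = t" using sPL tQM PQ by simp
  qed
  show ?thesis
    by (rule card_inj_on_le[OF inj]) (use into X_finite[OF fA' fD'] in auto)
qed

lemma X_card_le:
  assumes "finite A" "finite A'" "finite D" "finite D'" "e \<notin> D" "e' \<notin> D'"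
    "card A = card A'" "card D = card D'"
  shows "card (X l A e D r) \<le> card (X l A' e' D' r)"
proof -
  obtain h where h: "bij_betw h A A'" using finite_same_card_bij assms by metis
  obtain g0 where g0: "bij_betw g0 D D'" using finite_same_card_bij assms by metis
  define g where "g = (\<lambda>x. if x = e then e' else g0 x)"
  have "inj_on g (insert e D)" using g0 assms(5,6) unfolding g_def bij_betw_def inj_on_def by auto
  moreover have "g ` D = D'" using g0 assms(5) unfolding g_def bij_betw_def by auto
  ultimately show ?thesis using X_map_le[of A' D' h A g e D e' l r] h assms unfolding bij_betw_def g_def
    by auto
qed

lemma X_card_eq:
  assumes "finite A" "finite A'" "finite D" "finite D'" "e \<notin> D" "e' \<notin> D'"
    "card A = card A'" "card D = card D'"
  shows "card (X l A e D r) = card (X l A' e' D' r)"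
  using X_card_le[of A A' D D' e e' l r] X_card_le[of A' A D' D e' e l r] assms by auto



definition blk :: "nat set set \<Rightarrow> nat \<Rightarrow> nat set" where
  "blk P a = (THE B. B \<in> P \<and> a \<in> B)"

lemma blk_eq: "partition_on A P \<Longrightarrow> B \<in> P \<Longrightarrow> a \<in> B \<Longrightarrow> blk P a = B"
  unfolding blk_def
proof (rule the_equality)
  fix B' assume "partition_on A P" "B \<in> P" "a \<in> B" "B' \<in> P \<and> a \<in> B'"
  then show "B' = B" unfolding partition_on_def disjoint_def by blast
qed auto

lemma blk_in: "partition_on A P \<Longrightarrow> a \<in> A \<Longrightarrow> blk P a \<in> P \<and> a \<in> blk P a"
proof -
  assume p: "partition_on A P" and a: "a \<in> A"
  then obtain B where "B \<in> P" "a \<in> B" unfolding partition_on_def by auto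
  then show ?thesis using blk_eq[OF p] by auto
qed

lemma X_transport:
  assumes s: "(P, L) \<in> X l A e D r" and psi: "\<forall>B\<in>P. \<psi> (\<phi> B) = B"
    and pa: "partition_on A' (\<phi> ` P)" and cb: "\<forall>B\<in>P. l \<le> card (\<phi> B)"
  shows "(\<phi> ` P, \<lambda>B'\<in>\<phi> ` P. L (\<psi> B')) \<in> X l A' e D r"
proof -
  have L: "L \<in> P \<rightarrow>\<^sub>E insert e D"
      and c1: "\<forall>j\<in>D. card {B\<in>P. L B = j} = 1" and ce: "card {B\<in>P. L B = e} = r"
      using s unfolding X_def by auto
  have inj: "inj_on \<phi> P" using psi by (metis inj_onI)
  define L' where "L' = (\<lambda>B'\<in>\<phi> ` P. L (\<psi> B'))"
  have fib: "{B'\<in>\<phi> ` P. L' B' = j} = \<phi> ` {B\<in>P. L B = j}" for j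
  proof
    show "{B'\<in>\<phi> ` P. L' B' = j} \<subseteq> \<phi> ` {B\<in>P. L B = j}"
    proof
      fix B' assume "B' \<in> {B'\<in>\<phi> ` P. L' B' = j}"
      then obtain B where "B \<in> P" "B' = \<phi> B" "L' B' = j" by auto
      then show "B' \<in> \<phi> ` {B\<in>P. L B = j}" unfolding L'_def using psi by auto
    qed
    show "\<phi> ` {B\<in>P. L B = j} \<subseteq> {B'\<in>\<phi> ` P. L' B' = j}"
      unfolding L'_def using psi by auto
  qed
  have cfib: "card {B'\<in>\<phi> ` P. L' B' = j} = card {B\<in>P. L B = j}" for j
    unfolding fib by (rule card_image) (rule inj_on_subset[OF inj], auto)
  have "L' \<in> \<phi> ` P \<rightarrow>\<^sub>E insert e D" unfolding L'_def using L psi by auto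
  moreover have "\<forall>B\<in>\<phi> ` P. l \<le> card B" using cb by auto
  ultimately have "(\<phi> ` P, L') \<in> X l A' e D r" unfolding X_def using pa cfib c1 ce by simp
  then show ?thesis unfolding L'_def .
qed

lemma part_ins:
  assumes p: "partition_on (A - {a}) P" and B: "B \<in> P" and a: "a \<in> A"
  shows "partition_on A ((\<lambda>C. if C = B then insert a C else C) ` P)"
proof (rule partition_onI)
  have U: "\<Union>P = A - {a}" and d: "disjoint P" and ne: "{} \<notin> P" using p unfolding partition_on_def by auto
  show "\<Union>((\<lambda>C. if C = B then insert a C else C) ` P) = A"
    using U B a by (auto split: if_splits)
  show "{} \<notin> (\<lambda>C. if C = B then insert a C else C) ` P" using ne by auto
  fix p q assume pq: "p \<in> (\<lambda>C. if C = B then insert a C else C) ` P" "q \<in> (\<lambda>C. if C = B then insert a C else C) ` P" "p \<noteq> q"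
  obtain C1 where C1: "C1 \<in> P" "p = (if C1 = B then insert a C1 else C1)" using pq(1) by blast
  obtain C2 where C2: "C2 \<in> P" "q = (if C2 = B then insert a C2 else C2)" using pq(2) by blast
  have "C1 \<noteq> C2" using C1 C2 pq(3) by auto
  note C = C1 C2 this
  have "C1 \<inter> C2 = {}" using d C unfolding disjoint_def by auto
  moreover have "a \<notin> C1" "a \<notin> C2" using U C by auto
  ultimately show "disjnt p q" using C unfolding disjnt_def by auto
qed

lemma part_del:
  assumes p: "partition_on A P" and a: "a \<in> A" and c: "card (blk P a) \<ge> 2" and fA: "finite A"
  shows "partition_on (A - {a}) ((\<lambda>C. C - {a}) ` P)"
    and "\<And>C. C \<in> P \<Longrightarrow> (C - {a} = blk P a - {a}) = (C = blk P a)"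
    and "\<And>C. C \<in> P \<Longrightarrow> C \<noteq> blk P a \<Longrightarrow> a \<notin> C"
proof -
  have U: "\<Union>P = A" and d: "disjoint P" and ne: "{} \<notin> P" using p unfolding partition_on_def by auto
  have Ba: "blk P a \<in> P" "a \<in> blk P a" using blk_in[OF p a] by auto
  have fB: "finite (blk P a)" using Ba U fA by (meson Union_upper finite_subset)
  have neB: "blk P a - {a} \<noteq> {}"
  proof
    assume "blk P a - {a} = {}"
    then have "blk P a = {a}" using Ba by auto
    then show False using c by simp
  qed
  show na: "a \<notin> C" if "C \<in> P" "C \<noteq> blk P a" for C
    using blk_eq[OF p that(1)] that(2) by auto
  have dis: "C \<inter> blk P a = {}" if "C \<in> P" "C \<noteq> blk P a" for C
    using d that Ba unfolding disjoint_def by auto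
  show eqv: "(C - {a} = blk P a - {a}) = (C = blk P a)" if "C \<in> P" for C
  proof
    assume h: "C - {a} = blk P a - {a}"
    show "C = blk P a"
    proof (rule ccontr)
      assume "C \<noteq> blk P a"
      then have "C \<inter> blk P a = {}" using dis that by auto
      then show False using h neB by auto
    qed
  qed simp
  show "partition_on (A - {a}) ((\<lambda>C. C - {a}) ` P)"
  proof (rule partition_onI)
    show "\<Union>((\<lambda>C. C - {a}) ` P) = A - {a}" using U by auto
    show "{} \<notin> (\<lambda>C. C - {a}) ` P"
    proof
      assume "{} \<in> (\<lambda>C. C - {a}) ` P"
      then obtain C where C: "C \<in> P" "C - {a} = {}" by auto
      show False
      proof (cases "C = blk P a")
        case True then show ?thesis using C neB by simp
      next
        case False then show ?thesis using C na ne by (metis Diff_empty Diff_insert0)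
      qed
    qed
    fix p q assume pq: "p \<in> (\<lambda>C. C - {a}) ` P" "q \<in> (\<lambda>C. C - {a}) ` P" "p \<noteq> q"
    obtain C1 where C1: "C1 \<in> P" "p = C1 - {a}" using pq(1) by blast
    obtain C2 where C2: "C2 \<in> P" "q = C2 - {a}" using pq(2) by blast
    have "C1 \<noteq> C2" using C1 C2 pq(3) by auto
    note C = C1 C2 this
    have "C1 \<inter> C2 = {}" using d C unfolding disjoint_def by auto
    then show "disjnt p q" using C unfolding disjnt_def by auto
  qed
qed



definition ins1 :: "nat \<Rightarrow> nat set \<Rightarrow> nat set set \<Rightarrow> (nat set \<Rightarrow> nat) \<Rightarrow> nat set set \<times> (nat set \<Rightarrow> nat)" where
 "ins1 a B P L = ((\<lambda>C. if C = B then insert a C else C) ` P,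
     \<lambda>B'\<in>(\<lambda>C. if C = B then insert a C else C) ` P. L (B' - {a}))"

definition del1 :: "nat \<Rightarrow> nat set set \<Rightarrow> (nat set \<Rightarrow> nat) \<Rightarrow> (nat set set \<times> (nat set \<Rightarrow> nat)) \<times> nat set" where
 "del1 a P L = (((\<lambda>C. C - {a}) ` P,
     \<lambda>B'\<in>(\<lambda>C. C - {a}) ` P. L (if B' = blk P a - {a} then blk P a else B')), blk P a - {a})"

lemma ins1_mem:
  assumes fA: "finite A" and a: "a \<in> A" and s: "(P, L) \<in> X l (A - {a}) e D r" and B: "B \<in> P"
  shows "ins1 a B P L \<in> X l A e D r" "l < card (blk (fst (ins1 a B P L)) a)"
proof -
  have p: "partition_on (A - {a}) P" and cb: "\<forall>C\<in>P. l \<le> card C" using s unfolding X_def by auto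
  have sub: "C \<subseteq> A - {a}" if "C \<in> P" for C using p that unfolding partition_on_def by auto
  have fB: "finite B" using sub[OF B] fA by (meson finite_Diff finite_subset)
  have aB: "a \<notin> B" using sub[OF B] by auto
  let ?\<phi> = "\<lambda>C. if C = B then insert a C else C"
  have psi: "\<forall>C\<in>P. ?\<phi> C - {a} = C" using sub by auto
  have pa: "partition_on A (?\<phi> ` P)" by (rule part_ins[OF p B a])
  have cb2: "\<forall>C\<in>P. l \<le> card (?\<phi> C)" using cb fB aB by auto
  show "ins1 a B P L \<in> X l A e D r"
    unfolding ins1_def by (rule X_transport[OF s psi pa cb2])
  have "blk (?\<phi> ` P) a = insert a B" by (rule blk_eq[OF pa]) (use B in auto)
  then show "l < card (blk (fst (ins1 a B P L)) a)" unfolding ins1_def using cb B fB aB by auto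
qed

lemma del1_mem:
  assumes fA: "finite A" and a: "a \<in> A" and s: "(P, L) \<in> X l A e D r" and l: "l \<ge> 1"
    and c: "l < card (blk P a)"
  shows "del1 a P L \<in> Sigma (X l (A - {a}) e D r) fst"
proof -
  have p: "partition_on A P" and cb: "\<forall>C\<in>P. l \<le> card C" using s unfolding X_def by auto
  have c2: "card (blk P a) \<ge> 2" using c l by auto
  note pd = part_del[OF p a c2 fA]
  have Ba: "blk P a \<in> P" "a \<in> blk P a" using blk_in[OF p a] by auto
  let ?\<chi> = "\<lambda>B'. if B' = blk P a - {a} then blk P a else B'"
  have psi: "\<forall>C\<in>P. ?\<chi> (C - {a}) = C" using pd(2,3) by auto
  have cb2: "\<forall>C\<in>P. l \<le> card (C - {a})"
  proof
    fix C assume C: "C \<in> P"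
    show "l \<le> card (C - {a})"
    proof (cases "C = blk P a")
      case True then show ?thesis using c Ba by auto
    next
      case False then show ?thesis using pd(3)[OF C] cb C by auto
    qed
  qed
  have "((\<lambda>C. C - {a}) ` P, \<lambda>B'\<in>(\<lambda>C. C - {a}) ` P. L (?\<chi> B')) \<in> X l (A - {a}) e D r"
    by (rule X_transport[OF s psi pd(1) cb2])
  moreover have "blk P a - {a} \<in> (\<lambda>C. C - {a}) ` P" using Ba by auto
  ultimately show ?thesis unfolding del1_def by auto
qed

lemma del1_ins1:
  assumes fA: "finite A" and a: "a \<in> A" and s: "(P, L) \<in> X l (A - {a}) e D r" and B: "B \<in> P"
  shows "del1 a (fst (ins1 a B P L)) (snd (ins1 a B P L)) = ((P, L), B)"
proof -
  have p: "partition_on (A - {a}) P" and L: "L \<in> P \<rightarrow>\<^sub>E insert e D" using s unfolding X_def by auto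
  have sub: "C \<subseteq> A - {a}" if "C \<in> P" for C using p that unfolding partition_on_def by auto
  have aB: "a \<notin> B" using sub[OF B] by auto
  let ?\<phi> = "\<lambda>C. if C = B then insert a C else C"
  have psi: "\<forall>C\<in>P. ?\<phi> C - {a} = C" using sub by auto
  have pa: "partition_on A (?\<phi> ` P)" by (rule part_ins[OF p B a])
  have bl: "blk (?\<phi> ` P) a = insert a B" by (rule blk_eq[OF pa]) (use B in auto)
  have "(\<lambda>C. C - {a}) ` ?\<phi> ` P = (\<lambda>C. C) ` P"
    unfolding image_image by (rule image_cong[OF refl]) (use psi in blast)
  then have i1: "(\<lambda>C. C - {a}) ` ?\<phi> ` P = P" by simp
  have i2: "insert a B - {a} = B" using aB by auto
  have lab: "(\<lambda>B'\<in>P. (\<lambda>B'\<in>?\<phi> ` P. L (B' - {a})) (if B' = B then insert a B else B')) = L"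
  proof (rule PiE_ext[OF _ L])
    show "(\<lambda>B'\<in>P. (\<lambda>B'\<in>?\<phi> ` P. L (B' - {a})) (if B' = B then insert a B else B')) \<in> P \<rightarrow>\<^sub>E insert e D"
    proof -
      have "\<And>B'. B' \<in> P \<Longrightarrow> (\<lambda>B'\<in>?\<phi> ` P. L (B' - {a})) (if B' = B then insert a B else B') = L B'"
      proof -
        fix B' assume B': "B' \<in> P"
        show "(\<lambda>B'\<in>?\<phi> ` P. L (B' - {a})) (if B' = B then insert a B else B') = L B'"
        proof (cases "B' = B")
          case True then show ?thesis using B i2 by force
        next
          case False
          then have "B' \<in> ?\<phi> ` P" using B' by force
          moreover have "B' - {a} = B'" using psi B' False by (metis (full_types))
          ultimately show ?thesis using False by simp
        qed
      qed
      then show ?thesis using L by auto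
    qed
    fix i assume i: "i \<in> P"
    show "(\<lambda>B'\<in>P. (\<lambda>B'\<in>?\<phi> ` P. L (B' - {a})) (if B' = B then insert a B else B')) i = L i"
    proof (cases "i = B")
      case True then show ?thesis using B i2 by force
    next
      case False
      then have "i \<in> ?\<phi> ` P" using i by force
      moreover have "i - {a} = i" using psi i False by (metis (full_types))
      ultimately show ?thesis using False i by simp
    qed
  qed
  show ?thesis unfolding ins1_def del1_def fst_conv snd_conv bl i1 i2 using lab by simp
qed

lemma ins1_del1:
  assumes fA: "finite A" and a: "a \<in> A" and s: "(P, L) \<in> X l A e D r" and l: "l \<ge> 1"
    and c: "l < card (blk P a)"
  shows "(case del1 a P L of ((Q, M), B) \<Rightarrow> ins1 a B Q M) = (P, L)"
proof -
  have p: "partition_on A P" and L: "L \<in> P \<rightarrow>\<^sub>E insert e D" using s unfolding X_def by auto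
  have c2: "card (blk P a) \<ge> 2" using c l by auto
  note pd = part_del[OF p a c2 fA]
  have Ba: "blk P a \<in> P" "a \<in> blk P a" using blk_in[OF p a] by auto
  let ?B = "blk P a - {a}"
  let ?\<phi> = "\<lambda>C. if C = ?B then insert a C else C"
  have phi: "?\<phi> (C - {a}) = C" if "C \<in> P" for C
    using pd(2,3)[OF that] Ba by auto
  have "?\<phi> ` (\<lambda>C. C - {a}) ` P = (\<lambda>C. C) ` P"
    unfolding image_image by (rule image_cong[OF refl]) (use phi in blast)
  then have i1: "?\<phi> ` (\<lambda>C. C - {a}) ` P = P" by simp
  let ?M = "\<lambda>B'\<in>(\<lambda>C. C - {a}) ` P. L (if B' = ?B then blk P a else B')"
  have lab: "(\<lambda>B'\<in>P. ?M (B' - {a})) = L"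
  proof (rule PiE_ext[OF _ L])
    have eq: "?M (B' - {a}) = L B'" if "B' \<in> P" for B'
    proof -
      have "B' - {a} \<in> (\<lambda>C. C - {a}) ` P" using that by auto
      moreover have "(if B' - {a} = ?B then blk P a else B' - {a}) = B'"
        using pd(2,3)[OF that] by auto
      ultimately show ?thesis by simp
    qed
    then show "(\<lambda>B'\<in>P. ?M (B' - {a})) \<in> P \<rightarrow>\<^sub>E insert e D" using L by auto
    show "\<And>i. i \<in> P \<Longrightarrow> (\<lambda>B'\<in>P. ?M (B' - {a})) i = L i" using eq by simp
  qed
  show ?thesis unfolding del1_def ins1_def using i1 lab by simp
qed

lemma part1_card:
  assumes fA: "finite A" and a: "a \<in> A" and l: "l \<ge> 1" and fD: "finite D" and eD: "e \<notin> D"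
  shows "card {s \<in> X l A e D r. l < card (blk (fst s) a)} = (card D + r) * card (X l (A - {a}) e D r)"
proof -
  let ?S = "Sigma (X l (A - {a}) e D r) fst"
  let ?f = "\<lambda>((P, L), B). ins1 a B P L"
  let ?g = "\<lambda>(P, L). del1 a P L"
  have "bij_betw ?f ?S {s \<in> X l A e D r. l < card (blk (fst s) a)}"
  proof (rule bij_betw_byWitness[where f' = ?g])
    show "\<forall>x\<in>?S. ?g (?f x) = x"
    proof
      fix x assume x: "x \<in> ?S"
      obtain P L B where xe: "x = ((P, L), B)" by (metis prod.collapse)
      have "(P, L) \<in> X l (A - {a}) e D r" "B \<in> P" using x xe by auto
      from del1_ins1[OF fA a this] show "?g (?f x) = x" unfolding xe
        by (simp add: case_prod_beta)
    qed
    show "\<forall>s\<in>{s \<in> X l A e D r. l < card (blk (fst s) a)}. ?f (?g s) = s"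
    proof
      fix s assume s: "s \<in> {s \<in> X l A e D r. l < card (blk (fst s) a)}"
      obtain P L where se: "s = (P, L)" by (metis prod.collapse)
      have "(P, L) \<in> X l A e D r" "l < card (blk P a)" using s se by auto
      from ins1_del1[OF fA a this(1) l this(2)] show "?f (?g s) = s" unfolding se by (simp add: split_def)
    qed
    show "?f ` ?S \<subseteq> {s \<in> X l A e D r. l < card (blk (fst s) a)}"
    proof
      fix y assume "y \<in> ?f ` ?S"
      then obtain P L B where "(P, L) \<in> X l (A - {a}) e D r" "B \<in> P" "y = ins1 a B P L" by auto
      then show "y \<in> {s \<in> X l A e D r. l < card (blk (fst s) a)}" using ins1_mem[OF fA a] by auto
    qed
    show "?g ` {s \<in> X l A e D r. l < card (blk (fst s) a)} \<subseteq> ?S"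
    proof
      fix y assume "y \<in> ?g ` {s \<in> X l A e D r. l < card (blk (fst s) a)}"
      then obtain P L where "(P, L) \<in> X l A e D r" "l < card (blk P a)" "y = del1 a P L" by auto
      then show "y \<in> ?S" using del1_mem[OF fA a _ l] by auto
    qed
  qed
  then have "card {s \<in> X l A e D r. l < card (blk (fst s) a)} = card ?S" by (simp add: bij_betw_same_card)
  also have "\<dots> = (\<Sum>s\<in>X l (A - {a}) e D r. card (fst s))"
  proof (rule card_SigmaI)
    show "finite (X l (A - {a}) e D r)" using X_finite fA fD by auto
    show "\<forall>s\<in>X l (A - {a}) e D r. finite (fst s)"
    proof
      fix s assume "s \<in> X l (A - {a}) e D r"
      then have "partition_on (A - {a}) (fst s)" unfolding X_def by auto
      then show "finite (fst s)" using finite_elements fA by blast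
    qed
  qed
  also have "\<dots> = (\<Sum>s\<in>X l (A - {a}) e D r. card D + r)"
  proof (rule sum.cong[OF refl])
    fix s assume "s \<in> X l (A - {a}) e D r"
    then show "card (fst s) = card D + r" using X_cardP[of "fst s" "snd s" l "A - {a}" e D r] fA fD eD by auto
  qed
  finally show ?thesis by simp
qed



definition ins2 :: "nat \<Rightarrow> nat set \<Rightarrow> nat \<Rightarrow> nat set set \<Rightarrow> (nat set \<Rightarrow> nat) \<Rightarrow> nat set set \<times> (nat set \<Rightarrow> nat)" where
 "ins2 a C j P L = (insert (insert a C) P, \<lambda>B\<in>insert (insert a C) P. if B = insert a C then j else L B)"

definition del2 :: "nat \<Rightarrow> nat set set \<Rightarrow> (nat set \<Rightarrow> nat) \<Rightarrow> (nat set \<times> nat) \<times> (nat set set \<times> (nat set \<Rightarrow> nat))" where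
 "del2 a P L = ((blk P a - {a}, L (blk P a)), (P - {blk P a}, restrict L (P - {blk P a})))"

lemma ins2_mem:
  assumes fA: "finite A" and a: "a \<in> A" and l: "l \<ge> 1" and r: "r \<ge> 1" and eD: "e \<notin> D"
    and C: "C \<subseteq> A - {a}" "card C = l - 1" and j: "j \<in> insert e D"
    and s: "(P, L) \<in> X l (A - insert a C) e (D - {j}) (if j = e then r - 1 else r)"
  shows "ins2 a C j P L \<in> X l A e D r" "card (blk (fst (ins2 a C j P L)) a) = l"
proof -
  let ?K = "insert a C"
  have p: "partition_on (A - ?K) P" and cb: "\<forall>B\<in>P. l \<le> card B"
    and L: "L \<in> P \<rightarrow>\<^sub>E insert e (D - {j})"
    and c1: "\<forall>x\<in>D - {j}. card {B\<in>P. L B = x} = 1"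
    and ce: "card {B\<in>P. L B = e} = (if j = e then r - 1 else r)"
    using s unfolding X_def by auto
  have U: "\<Union>P = A - ?K" using p unfolding partition_on_def by auto
  have KP: "?K \<notin> P" using U by auto
  have fC: "finite C" using C fA by (meson finite_Diff finite_subset)
  have aC: "a \<notin> C" using C by auto
  have cK: "card ?K = l" using C fC aC l by auto
  have pa: "partition_on A (insert ?K P)"
  proof -
    have "disjnt ?K (\<Union>P)" using U unfolding disjnt_def by auto
    moreover have "A - ?K = A - ?K" ..
    ultimately show ?thesis using partition_on_insert[of ?K P A] p C a by auto
  qed
  define L' where "L' = (\<lambda>B\<in>insert ?K P. if B = ?K then j else L B)"
  have L'P: "L' B = L B" if "B \<in> P" for B using that KP unfolding L'_def by auto
  have L'K: "L' ?K = j" unfolding L'_def by auto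
  have fib: "{B\<in>insert ?K P. L' B = x} = (if j = x then insert ?K {B\<in>P. L B = x} else {B\<in>P. L B = x})" for x
    using L'P L'K by auto
  have fP: "finite P" using finite_elements[OF _ p] fA by auto
  have LD: "\<forall>B\<in>P. L B \<in> insert e D" using L by auto
  have "L' \<in> insert ?K P \<rightarrow>\<^sub>E insert e D" unfolding L'_def restrict_PiE_iff using LD j KP by auto
  moreover have "\<forall>B\<in>insert ?K P. l \<le> card B" using cb cK by auto
  moreover have "\<forall>x\<in>D. card {B\<in>insert ?K P. L' B = x} = 1"
  proof
    fix x assume x: "x \<in> D"
    show "card {B\<in>insert ?K P. L' B = x} = 1"
    proof (cases "j = x")
      case True
      then have E: "{B\<in>P. L B = x} = {}" using L x eD by auto
      show ?thesis unfolding fib by (simp add: E True)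
    next
      case False
      then show ?thesis unfolding fib using c1 x by simp
    qed
  qed
  moreover have "card {B\<in>insert ?K P. L' B = e} = r"
  proof (cases "j = e")
    case True
    have "card (insert ?K {B\<in>P. L B = e}) = Suc (card {B\<in>P. L B = e})"
      using KP fP by (intro card_insert_disjoint) auto
    then show ?thesis unfolding fib using True ce r by simp
  next
    case False
    then show ?thesis unfolding fib using ce by simp
  qed
  ultimately have "(insert ?K P, L') \<in> X l A e D r" unfolding X_def using pa by simp
  then show "ins2 a C j P L \<in> X l A e D r" unfolding ins2_def L'_def .
  have "blk (insert ?K P) a = ?K" by (rule blk_eq[OF pa]) auto
  then show "card (blk (fst (ins2 a C j P L)) a) = l" unfolding ins2_def using cK by simp
qed

lemma del2_mem:
  assumes fA: "finite A" and a: "a \<in> A" and l: "l \<ge> 1" and eD: "e \<notin> D"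
    and s: "(P, L) \<in> X l A e D r" and c: "card (blk P a) = l"
  shows "fst (fst (del2 a P L)) \<subseteq> A - {a}" "card (fst (fst (del2 a P L))) = l - 1"
    "snd (fst (del2 a P L)) \<in> insert e D"
    "snd (del2 a P L) \<in> X l (A - insert a (fst (fst (del2 a P L)))) e (D - {snd (fst (del2 a P L))})
        (if snd (fst (del2 a P L)) = e then r - 1 else r)"
proof -
  have p: "partition_on A P" and cb: "\<forall>B\<in>P. l \<le> card B"
    and L: "L \<in> P \<rightarrow>\<^sub>E insert e D"
    and c1: "\<forall>x\<in>D. card {B\<in>P. L B = x} = 1"
    and ce: "card {B\<in>P. L B = e} = r"
    using s unfolding X_def by auto
  let ?B = "blk P a"
  let ?j = "L ?B"
  have Ba: "?B \<in> P" "a \<in> ?B" using blk_in[OF p a] by auto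
  have BA: "?B \<subseteq> A" using Ba p unfolding partition_on_def by auto
  have fB: "finite ?B" using BA fA by (meson finite_subset)
  have fP: "finite P" using finite_elements[OF fA p] .
  show "fst (fst (del2 a P L)) \<subseteq> A - {a}" unfolding del2_def using BA by auto
  show "card (fst (fst (del2 a P L))) = l - 1" unfolding del2_def using c fB Ba by auto
  show "snd (fst (del2 a P L)) \<in> insert e D" unfolding del2_def using L Ba by auto
  have ins: "insert a (?B - {a}) = ?B" using Ba by auto
  have pr: "partition_on (A - ?B) (P - {?B})"
  proof -
    have U: "\<Union>P = A" and d: "disjoint P" using p unfolding partition_on_def by auto
    have "disjnt ?B (\<Union>(P - {?B}))" using d Ba unfolding disjnt_def disjoint_def by auto
    moreover have "insert ?B (P - {?B}) = P" using Ba by auto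
    ultimately show ?thesis using partition_on_insert[of ?B "P - {?B}" A] p by auto
  qed
  have uniq: "B = ?B" if "B \<in> P" "L B = ?j" "?j \<in> D" for B
  proof -
    have "card {B\<in>P. L B = ?j} = 1" using c1 that(3) by auto
    then obtain B0 where "{B\<in>P. L B = ?j} = {B0}" by (rule card_1_singletonE)
    then show ?thesis using that(1,2) Ba by blast
  qed
  have LR: "restrict L (P - {?B}) \<in> (P - {?B}) \<rightarrow>\<^sub>E insert e (D - {?j})"
  proof -
    have "L B \<in> insert e (D - {?j})" if "B \<in> P - {?B}" for B
    proof -
      have "L B \<in> insert e D" using L that by auto
      moreover have "L B = ?j \<Longrightarrow> ?j \<in> D \<Longrightarrow> False" using uniq that by auto
      ultimately show ?thesis by auto
    qed
    then show ?thesis by (simp add: restrict_PiE_iff)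
  qed
  have fib: "{B\<in>P - {?B}. restrict L (P - {?B}) B = x} = {B\<in>P. L B = x} - {?B}" for x
    by auto
  have c1': "\<forall>x\<in>D - {?j}. card {B\<in>P - {?B}. restrict L (P - {?B}) B = x} = 1"
  proof
    fix x assume x: "x \<in> D - {?j}"
    then have "{B\<in>P. L B = x} - {?B} = {B\<in>P. L B = x}" by auto
    then show "card {B\<in>P - {?B}. restrict L (P - {?B}) B = x} = 1" unfolding fib using c1 x by simp
  qed
  have ce': "card {B\<in>P - {?B}. restrict L (P - {?B}) B = e} = (if ?j = e then r - 1 else r)"
  proof (cases "?j = e")
    case True
    then have "?B \<in> {B\<in>P. L B = e}" using Ba by auto
    then have "card ({B\<in>P. L B = e} - {?B}) = r - 1" using ce fP by (simp add: card_Diff_singleton)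
    then show ?thesis unfolding fib using True by simp
  next
    case False
    then have "{B\<in>P. L B = e} - {?B} = {B\<in>P. L B = e}" by auto
    then show ?thesis unfolding fib using ce False by simp
  qed
  have "(P - {?B}, restrict L (P - {?B})) \<in> X l (A - ?B) e (D - {?j}) (if ?j = e then r - 1 else r)"
    unfolding X_def using pr cb LR c1' ce' by simp
  then show "snd (del2 a P L) \<in> X l (A - insert a (fst (fst (del2 a P L)))) e (D - {snd (fst (del2 a P L))})
        (if snd (fst (del2 a P L)) = e then r - 1 else r)" unfolding del2_def fst_conv snd_conv ins .
qed

lemma del2_ins2:
  assumes a: "a \<in> A" and C: "C \<subseteq> A - {a}"
    and s: "(P, L) \<in> X l (A - insert a C) e D' r'"
  shows "del2 a (fst (ins2 a C j P L)) (snd (ins2 a C j P L)) = ((C, j), (P, L))"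
proof -
  let ?K = "insert a C"
  have p: "partition_on (A - ?K) P" and L: "L \<in> P \<rightarrow>\<^sub>E insert e D'" using s unfolding X_def by auto
  have U: "\<Union>P = A - ?K" using p unfolding partition_on_def by auto
  have KP: "?K \<notin> P" using U by auto
  have pa: "partition_on A (insert ?K P)"
  proof -
    have "disjnt ?K (\<Union>P)" using U unfolding disjnt_def by auto
    then show ?thesis using partition_on_insert[of ?K P A] p C a by auto
  qed
  have bl: "blk (insert ?K P) a = ?K" by (rule blk_eq[OF pa]) auto
  have aC: "a \<notin> C" using C by auto
  have i1: "?K - {a} = C" using aC by auto
  have i2: "insert ?K P - {?K} = P" using KP by auto
  have lab: "restrict (\<lambda>B\<in>insert ?K P. if B = ?K then j else L B) P = L"
  proof (rule PiE_ext[OF _ L])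
    have "\<And>B. B \<in> P \<Longrightarrow> (\<lambda>B\<in>insert ?K P. if B = ?K then j else L B) B = L B" using KP by auto
    then show "restrict (\<lambda>B\<in>insert ?K P. if B = ?K then j else L B) P \<in> P \<rightarrow>\<^sub>E insert e D'"
      using L by (auto simp: restrict_PiE_iff)
    show "\<And>i. i \<in> P \<Longrightarrow> restrict (\<lambda>B\<in>insert ?K P. if B = ?K then j else L B) P i = L i"
      using KP by auto
  qed
  show ?thesis unfolding ins2_def del2_def fst_conv snd_conv bl i1 i2 lab by simp
qed

lemma ins2_del2:
  assumes a: "a \<in> A" and s: "(P, L) \<in> X l A e D r"
  shows "(case del2 a P L of ((C, j), (Q, M)) \<Rightarrow> ins2 a C j Q M) = (P, L)"
proof -
  have p: "partition_on A P" and L: "L \<in> P \<rightarrow>\<^sub>E insert e D" using s unfolding X_def by auto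
  let ?B = "blk P a"
  have Ba: "?B \<in> P" "a \<in> ?B" using blk_in[OF p a] by auto
  have ins: "insert a (?B - {a}) = ?B" using Ba by auto
  have i2: "insert ?B (P - {?B}) = P" using Ba by auto
  have lab: "(\<lambda>B\<in>P. if B = ?B then L ?B else restrict L (P - {?B}) B) = L"
  proof (rule ext)
    fix x show "(\<lambda>B\<in>P. if B = ?B then L ?B else restrict L (P - {?B}) B) x = L x"
    proof (cases "x \<in> P")
      case True then show ?thesis by auto
    next
      case False then show ?thesis using PiE_arb[OF L False] by auto
    qed
  qed
  show ?thesis unfolding ins2_def del2_def using ins i2 lab by simp
qed

lemma part2_card:
  assumes fA: "finite A" and a: "a \<in> A" and l: "l \<ge> 1" and r: "r \<ge> 1" and fD: "finite D" and eD: "e \<notin> D"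
  shows "card {s \<in> X l A e D r. card (blk (fst s) a) = l} =
     (\<Sum>(C, j)\<in>{C. C \<subseteq> A - {a} \<and> card C = l - 1} \<times> insert e D.
        card (X l (A - insert a C) e (D - {j}) (if j = e then r - 1 else r)))"
proof -
  let ?I = "{C. C \<subseteq> A - {a} \<and> card C = l - 1} \<times> insert e D"
  let ?S = "Sigma ?I (\<lambda>(C, j). X l (A - insert a C) e (D - {j}) (if j = e then r - 1 else r))"
  let ?T = "{s \<in> X l A e D r. card (blk (fst s) a) = l}"
  let ?f = "\<lambda>((C, j), (P, L)). ins2 a C j P L"
  let ?g = "\<lambda>(P, L). del2 a P L"
  have "bij_betw ?f ?S ?T"
  proof (rule bij_betw_byWitness[where f' = ?g])
    show "\<forall>x\<in>?S. ?g (?f x) = x"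
    proof
      fix x assume x: "x \<in> ?S"
      obtain C j P L where xe: "x = ((C, j), (P, L))" by (metis prod.collapse)
      have "C \<subseteq> A - {a}" "(P, L) \<in> X l (A - insert a C) e (D - {j}) (if j = e then r - 1 else r)"
        using x xe by auto
      from del2_ins2[OF a this] show "?g (?f x) = x" unfolding xe
        by (simp add: split_def)
    qed
    show "\<forall>s\<in>?T. ?f (?g s) = s"
    proof
      fix s assume s: "s \<in> ?T"
      obtain P L where se: "s = (P, L)" by (metis prod.collapse)
      have "(P, L) \<in> X l A e D r" using s se by auto
      from ins2_del2[OF a this] show "?f (?g s) = s" unfolding se by (simp add: split_def)
    qed
    show "?f ` ?S \<subseteq> ?T"
    proof
      fix y assume "y \<in> ?f ` ?S"
      then obtain C j P L where "C \<subseteq> A - {a}" "card C = l - 1" "j \<in> insert e D"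
        "(P, L) \<in> X l (A - insert a C) e (D - {j}) (if j = e then r - 1 else r)" "y = ins2 a C j P L"
        by auto
      then show "y \<in> ?T" using ins2_mem[OF fA a l r eD] by auto
    qed
    show "?g ` ?T \<subseteq> ?S"
    proof
      fix y assume "y \<in> ?g ` ?T"
      then obtain P L where PL: "(P, L) \<in> X l A e D r" "card (blk P a) = l" "y = del2 a P L" by auto
      note dm = del2_mem[OF fA a l eD PL(1,2)]
      obtain C j Q M where ye: "y = ((C, j), (Q, M))" by (metis prod.collapse)
      show "y \<in> ?S" using dm unfolding PL(3)[symmetric] ye by auto
    qed
  qed
  then have "card ?T = card ?S" by (simp add: bij_betw_same_card)
  also have "\<dots> = (\<Sum>(C, j)\<in>?I. card (X l (A - insert a C) e (D - {j}) (if j = e then r - 1 else r)))"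
  proof -
    have fI: "finite ?I"
    proof -
      have "{C. C \<subseteq> A - {a} \<and> card C = l - 1} \<subseteq> Pow A" by auto
      then have "finite {C. C \<subseteq> A - {a} \<and> card C = l - 1}" using fA by (meson finite_Pow_iff finite_subset)
      then show ?thesis using fD by auto
    qed
    have fin: "\<forall>x\<in>?I. finite ((\<lambda>(C, j). X l (A - insert a C) e (D - {j}) (if j = e then r - 1 else r)) x)"
      using X_finite fA fD by auto
    have "card ?S = (\<Sum>x\<in>?I. card ((\<lambda>(C, j). X l (A - insert a C) e (D - {j}) (if j = e then r - 1 else r)) x))"
      by (rule card_SigmaI[OF fI fin])
    also have "\<dots> = (\<Sum>(C, j)\<in>?I. card (X l (A - insert a C) e (D - {j}) (if j = e then r - 1 else r)))"
      by (rule sum.cong) auto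
    finally show ?thesis .
  qed
  finally show ?thesis .
qed

lemma main_rec:
  assumes fA: "finite A" and a: "a \<in> A" and l: "l \<ge> 1" and r: "r \<ge> 1" and fD: "finite D" and eD: "e \<notin> D"
  shows "card (X l A e D r) = (card D + r) * card (X l (A - {a}) e D r) +
     (\<Sum>(C, j)\<in>{C. C \<subseteq> A - {a} \<and> card C = l - 1} \<times> insert e D.
        card (X l (A - insert a C) e (D - {j}) (if j = e then r - 1 else r)))"
proof -
  have ge: "l \<le> card (blk (fst s) a)" if "s \<in> X l A e D r" for s
  proof -
    have "partition_on A (fst s)" "\<forall>B\<in>fst s. l \<le> card B" using that unfolding X_def by auto
    then show ?thesis using blk_in[of A "fst s" a] a by auto
  qed
  have "X l A e D r = {s \<in> X l A e D r. l < card (blk (fst s) a)} \<union> {s \<in> X l A e D r. card (blk (fst s) a) = l}"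
    using ge by force
  moreover have "finite (X l A e D r)" using X_finite fA fD by auto
  ultimately have "card (X l A e D r) = card {s \<in> X l A e D r. l < card (blk (fst s) a)} + card {s \<in> X l A e D r. card (blk (fst s) a) = l}"
  proof -
    note fX = \<open>finite (X l A e D r)\<close>
    have "card ({s \<in> X l A e D r. l < card (blk (fst s) a)} \<union> {s \<in> X l A e D r. card (blk (fst s) a) = l})
      = card {s \<in> X l A e D r. l < card (blk (fst s) a)} + card {s \<in> X l A e D r. card (blk (fst s) a) = l}"
      by (rule card_Un_disjoint) (use fX in auto)
    then show ?thesis using \<open>X l A e D r = _\<close> by simp
  qed
  then show ?thesis using part1_card[OF fA a l fD eD] part2_card[OF fA a l r fD eD] by simp
qed



theorem mainTheorem9:
  fixes n k r l :: nat
  assumes "n \<ge> 1" and "k \<ge> 1" and "r \<ge> 1" and "l \<ge> 1"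
  shows "S_ge l n k r =
           (k + r - 1) * S_ge l (n - 1) k r
           + ((n - 1) choose (l - 1)) *
               ((k - 1) * S_ge l (n - l) (k - 1) r + S_ge l (n - l) k (r - 1))"
proof -
  let ?A = "{1..n}" and ?D = "{2..k}"
  let ?Cs = "{C. C \<subseteq> ?A - {n} \<and> card C = l - 1}"
  let ?F = "\<lambda>C j. card (X l (?A - insert n C) 1 (?D - {j}) (if j = 1 then r - 1 else r))"
  have nA: "n \<in> ?A" using assms by auto
  have eD: "(1::nat) \<notin> ?D" by auto
  have rec: "card (X l ?A 1 ?D r) = (card ?D + r) * card (X l (?A - {n}) 1 ?D r) +
     (\<Sum>(C, j)\<in>?Cs \<times> insert 1 ?D. ?F C j)"
    by (rule main_rec[OF _ nA assms(4) assms(3) _ eD]) auto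
  have An: "?A - {n} = {1..n - 1}" using assms by auto
  have inner: "(\<Sum>j\<in>insert 1 ?D. ?F C j) = (k - 1) * S_ge l (n - l) (k - 1) r + S_ge l (n - l) k (r - 1)"
    if C: "C \<in> ?Cs" for C
  proof -
    have fC: "finite C" using C by (auto intro: finite_subset)
    have nC: "n \<notin> C" using C by auto
    have cK: "card (insert n C) = l" using fC nC C assms(4) by auto
    have cR: "card (?A - insert n C) = n - l"
      using card_Diff_subset[of "insert n C" ?A] C nA fC cK by auto
    have f1: "?F C 1 = S_ge l (n - l) k (r - 1)"
    proof -
      have "?F C 1 = card (X l (?A - insert n C) 1 ?D (r - 1))" by simp
      also have "\<dots> = card (X l {1..n - l} 1 ?D (r - 1))"
        by (rule X_card_eq) (use cR in auto)
      also have "\<dots> = S_ge l (n - l) k (r - 1)" using S_ge_X[OF assms(2)] by simp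
      finally show ?thesis .
    qed
    have f2: "(\<Sum>j\<in>?D. ?F C j) = (k - 1) * S_ge l (n - l) (k - 1) r"
    proof (cases "k = 1")
      case True then show ?thesis by simp
    next
      case False
      then have k2: "k - 1 \<ge> 1" using assms(2) by auto
      have "?F C j = S_ge l (n - l) (k - 1) r" if j: "j \<in> ?D" for j
      proof -
        have j1: "j \<noteq> 1" using j by auto
        have "?F C j = card (X l (?A - insert n C) 1 (?D - {j}) r)" using j1 by simp
        also have "\<dots> = card (X l {1..n - l} 1 {2..k - 1} r)"
          by (rule X_card_eq) (use cR j in auto)
        also have "\<dots> = S_ge l (n - l) (k - 1) r" using S_ge_X[OF k2] by simp
        finally show ?thesis .
      qed
      then have "(\<Sum>j\<in>?D. ?F C j) = (\<Sum>j\<in>?D. S_ge l (n - l) (k - 1) r)" by (rule sum.cong[OF refl])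
      then show ?thesis by simp
    qed
    have "(\<Sum>j\<in>insert 1 ?D. ?F C j) = ?F C 1 + (\<Sum>j\<in>?D. ?F C j)"
      by (rule sum.insert) auto
    then show ?thesis using f1 f2 by simp
  qed
  have "(\<Sum>(C, j)\<in>?Cs \<times> insert 1 ?D. ?F C j) = (\<Sum>C\<in>?Cs. \<Sum>j\<in>insert 1 ?D. ?F C j)"
    by (rule sum.cartesian_product[symmetric])
  also have "\<dots> = (\<Sum>C\<in>?Cs. (k - 1) * S_ge l (n - l) (k - 1) r + S_ge l (n - l) k (r - 1))"
    by (rule sum.cong[OF refl]) (rule inner)
  also have "\<dots> = card ?Cs * ((k - 1) * S_ge l (n - l) (k - 1) r + S_ge l (n - l) k (r - 1))" by simp
  also have "card ?Cs = (n - 1) choose (l - 1)" using n_subsets[of "?A - {n}" "l - 1"] An by simp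
  finally have sum: "(\<Sum>(C, j)\<in>?Cs \<times> insert 1 ?D. ?F C j) =
      ((n - 1) choose (l - 1)) * ((k - 1) * S_ge l (n - l) (k - 1) r + S_ge l (n - l) k (r - 1))" .
  have "card ?D + r = k + r - 1" using assms(2) by auto
  then show ?thesis using rec sum S_ge_X[OF assms(2), of l n r] S_ge_X[OF assms(2), of l "n - 1" r] An
    by simp
qed

end
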